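(* If $R$ is a strongly $*$-clean ring, then ${\rm psr}(R)=1$.
   Context: A $*$-ring is a ring with identity with an involution $*$. A projection is $p$ with $p^2=p=p^*$. $R$ is strongly $*$-clean if each element is the sum of a projection and a unit that commute with each other. ${\rm psr}(R)=1$ means: for any $a,b\in R$ with $aR+bR=R$ there is a projection $p$ such that $a+bp$ is a unit. *)

theory Defs
  imports Main
begin

class star_ring = ring_1 +
  fixes invol :: "'a \<Rightarrow> 'a"
  assumes invol_add: "invol (x + y) = invol x + invol y"
    and invol_mult: "invol (x * y) = invol y * invol x"
    and invol_invol: "invol (invol x) = x"

definition is_unit :: "'a::ring_1 \<Rightarrow> bool" where
  "is_unit u \<longleftrightarrow> (\<exists>v. u * v = 1 \<and> v * u = 1)"

definition is_projection :: "'a::star_ring \<Rightarrow> bool" where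
  "is_projection p \<longleftrightarrow> p * p = p \<and> p = invol p"

definition strongly_star_clean :: "'a::star_ring itself \<Rightarrow> bool" where
  "strongly_star_clean _ \<longleftrightarrow>
     (\<forall>a::'a. \<exists>p u. is_projection p \<and> is_unit u \<and> a = p + u \<and> p * u = u * p)"

definition psr_one :: "'a::star_ring itself \<Rightarrow> bool" where
  "psr_one _ \<longleftrightarrow>
     (\<forall>a b::'a. (\<forall>r. \<exists>x y. r = a * x + b * y) \<longrightarrow>
        (\<exists>p. is_projection p \<and> is_unit (a + b * p)))"

end

theory Submission
  imports Defs
begin

context star_ring
begin

lemma invol_0: "invol 0 = 0"
  using invol_add[of 0 0] by simp

lemma invol_minus: "invol (- x) = - invol x"
  using invol_add[of x "-x"] invol_0 add.inverse_unique[of "invol x" "invol (-x)"] by simp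

lemma invol_diff: "invol (x - y) = invol x - invol y"
  using invol_add[of x "-y"] invol_minus[of y] by simp

lemma invol_1: "invol 1 = 1"
proof -
  have "invol (invol 1 * 1) = invol 1 * invol (invol 1)" by (rule invol_mult)
  hence "1 = invol 1 * 1" using invol_invol by simp
  thus ?thesis by simp
qed

end

lemma unit_inv:
  fixes u :: "'a::ring_1"
  assumes "is_unit u" obtains v where "u * v = 1" "v * u = 1"
  using assms unfolding is_unit_def by blast

lemma idem_proj:
  fixes e :: "'a::star_ring"
  assumes sc: "strongly_star_clean TYPE('a)" and ee: "e * e = e"
  shows "is_projection e"
proof -
  obtain p u where p: "is_projection p" and u: "is_unit u" and eq: "e = p + u"
    and c: "p * u = u * p"
    using sc unfolding strongly_star_clean_def by blast
  have pp: "p * p = p" and ps: "invol p = p" using p unfolding is_projection_def by auto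
  have uu: "u = e - p" using eq by simp
  have ep: "e * p = p * e" using eq c by (simp add: algebra_simps pp)
  have u2: "u * u = e - (e * p + e * p) + p"
    unfolding uu by (simp add: algebra_simps ee pp ep)
  have pe1: "p * (e * x) = e * (p * x)" for x by (simp add: mult.assoc[symmetric] ep)
  have ee1: "e * (e * x) = e * x" for x by (simp add: mult.assoc[symmetric] ee)
  have pp1: "p * (p * x) = p * x" for x by (simp add: mult.assoc[symmetric] pp)
  have "u * u * u = u"
    unfolding uu by (simp add: algebra_simps ee pp ep pe1 ee1 pp1)
  note u3 = this
  obtain v where v: "u * v = 1" "v * u = 1" using u unit_inv by blast
  have "u * u = 1"
  proof -
    have "u * u * u * v = u * v" using u3 by simp
    thus ?thesis using v by (simp add: mult.assoc)
  qed
  hence h: "e - (e * p + e * p) + p = 1" using u2 by simp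
  hence "e * (e - (e * p + e * p) + p) = e" by simp
  hence "e - (e * p + e * p) + e * p = e"
    by (simp add: algebra_simps ee mult.assoc[symmetric])
  hence ep0: "e * p = 0" by (simp add: algebra_simps)
  hence "e = 1 - p" using h by (simp add: algebra_simps)
  hence "invol e = e" by (simp add: invol_diff invol_1 ps)
  thus ?thesis unfolding is_projection_def using ee by simp
qed

lemma idem_central:
  fixes e :: "'a::star_ring"
  assumes sc: "strongly_star_clean TYPE('a)" and ee: "e * e = e"
  shows "e * r = r * e"
proof -
  have es: "invol e = e" using idem_proj[OF sc ee] unfolding is_projection_def by simp
  have e1: "e * (1 - e) = 0" "(1 - e) * e = 0" using ee by (simp_all add: algebra_simps)
  define f where "f = e + e * r * (1 - e)"
  have "f * f = f" unfolding f_def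
    by (simp add: algebra_simps ee mult.assoc)
       (simp add: mult.assoc[symmetric] ee)
  hence "invol f = f" using idem_proj[OF sc] unfolding is_projection_def by metis
  hence "e + (1 - e) * invol r * e = e + e * r * (1 - e)"
    unfolding f_def by (simp add: invol_add invol_mult invol_diff invol_1 es mult.assoc)
  hence "e * ((1 - e) * invol r * e) = e * (e * r * (1 - e))" by simp
  hence A: "e * r * (1 - e) = 0"
    by (simp add: mult.assoc[symmetric] e1 ee)
  define g where "g = e + (1 - e) * r * e"
  have "g * g = g" unfolding g_def
    by (simp add: algebra_simps ee mult.assoc)
       (simp add: mult.assoc[symmetric] ee)
  hence "invol g = g" using idem_proj[OF sc] unfolding is_projection_def by metis
  hence "e + e * invol r * (1 - e) = e + (1 - e) * r * e"
    unfolding g_def by (simp add: invol_add invol_mult invol_diff invol_1 es mult.assoc)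
  hence "(e * invol r * (1 - e)) * e = ((1 - e) * r * e) * e" by simp
  hence B: "(1 - e) * r * e = 0"
    by (simp add: mult.assoc e1 ee)
  from A have "e * r = e * r * e" by (simp add: algebra_simps) (metis ee mult.assoc)
  moreover from B have "r * e = e * r * e" by (simp add: algebra_simps)
  ultimately show ?thesis by simp
qed


lemma corner_mult:
  fixes e X Y X' Y' :: "'a::ring_1"
  assumes C: "\<And>r. e * r = r * e" and ee: "e * e = e"
  shows "(X * (1 - e) + Y * e) * (X' * (1 - e) + Y' * e) = X * X' * (1 - e) + Y * Y' * e"
proof -
  have C': "(1 - e) * r = r * (1 - e)" for r using C[of r] by (simp add: algebra_simps)
  have e1: "e * (1 - e) = 0" "(1 - e) * e = 0" "(1 - e) * (1 - e) = 1 - e"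
    using ee by (simp_all add: algebra_simps)
  have t1: "X * (1 - e) * (X' * (1 - e)) = X * X' * (1 - e)"
    by (metis C' e1(3) mult.assoc)
  have t2: "X * (1 - e) * (Y' * e) = 0"
    by (metis C' e1(2) mult.assoc mult_zero_right)
  have t3: "Y * e * (X' * (1 - e)) = 0"
    by (metis C e1(1) mult.assoc mult_zero_right)
  have t4: "Y * e * (Y' * e) = Y * Y' * e"
    by (metis C ee mult.assoc)
  show ?thesis by (simp add: distrib_left distrib_right t1 t2 t3 t4)
qed

lemma corner_unit:
  fixes e V W :: "'a::ring_1"
  assumes C: "\<And>r. e * r = r * e" and ee: "e * e = e" and V: "is_unit V" and W: "is_unit W"
  shows "is_unit (V * (1 - e) + W * e)"
proof -
  obtain V' where V': "V * V' = 1" "V' * V = 1" using V unit_inv by blast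
  obtain W' where W': "W * W' = 1" "W' * W = 1" using W unit_inv by blast
  have "(V * (1 - e) + W * e) * (V' * (1 - e) + W' * e) = 1"
    unfolding corner_mult[OF C ee] using V' W' by simp
  moreover have "(V' * (1 - e) + W' * e) * (V * (1 - e) + W * e) = 1"
    unfolding corner_mult[OF C ee] using V' W' by simp
  ultimately show ?thesis unfolding is_unit_def by blast
qed

lemma one_unit: "is_unit (1::'a::ring_1)" unfolding is_unit_def by auto

lemma neg_unit: assumes "is_unit (u::'a::ring_1)" shows "is_unit (- u)"
  using assms unfolding is_unit_def by (metis minus_mult_minus)

lemma dfinite:
  fixes s t :: "'a::star_ring"
  assumes sc: "strongly_star_clean TYPE('a)" and st: "s * t = 1"
  shows "is_unit s"
proof -
  have ie: "(t * s) * (t * s) = t * s" using st by (simp add: mult.assoc[symmetric]) (simp add: mult.assoc)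
  have C: "(t * s) * x = x * (t * s)" for x using idem_central[OF sc ie] by simp
  have "(t * s) * s = s * (t * s)" by (rule C)
  also have "\<dots> = s" using st by (simp add: mult.assoc[symmetric])
  finally have "t * s * s * t = s * t" by simp
  hence "t * s = 1" using st by (simp add: mult.assoc)
  thus ?thesis using st unfolding is_unit_def by blast
qed

lemma unit_mult:
  fixes u v :: "'a::ring_1"
  assumes "is_unit u" "is_unit v" shows "is_unit (u * v)"
proof -
  obtain u' where u: "u * u' = 1" "u' * u = 1" using assms(1) unit_inv by blast
  obtain v' where v: "v * v' = 1" "v' * v = 1" using assms(2) unit_inv by blast
  have "u * v * (v' * u') = 1" using u v by (simp add: mult.assoc[symmetric]) (simp add: mult.assoc)
  moreover have "(v' * u') * (u * v) = 1" using u v by (simp add: mult.assoc[symmetric]) (simp add: mult.assoc)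
  ultimately show ?thesis unfolding is_unit_def by blast
qed

theorem corollary4p6:
  assumes "strongly_star_clean TYPE('a::star_ring)"
  shows "psr_one TYPE('a)"
  unfolding psr_one_def
proof (intro allI impI)
  note sc = assms
  fix a b :: 'a
  assume "\<forall>r. \<exists>x y. r = a * x + b * y"
  then obtain x y where xy: "1 = a * x + b * y" by blast
  obtain e u where e: "is_projection e" and u: "is_unit u" and eu: "a * x = e + u"
    using sc unfolding strongly_star_clean_def by blast
  have ee: "e * e = e" using e unfolding is_projection_def by simp
  have C: "\<And>r. e * r = r * e" using idem_central[OF sc ee] by simp
  have e1: "e * (1 - e) = 0" "(1 - e) * e = 0" using ee by (simp_all add: algebra_simps)
  note CM = corner_mult[OF C ee]
  note CU = corner_unit[OF C ee]
  have U1: "is_unit (a * (1 - e) + 1 * e)"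
  proof -
    have "(a * (1 - e) + 1 * e) * (x * (1 - e) + 1 * e) = a * x * (1 - e) + 1 * 1 * e"
      by (rule CM)
    also have "a * x * (1 - e) = u * (1 - e)" using eu e1 by (simp add: distrib_right)
    finally have eq: "(a * (1 - e) + 1 * e) * (x * (1 - e) + 1 * e) = u * (1 - e) + 1 * e" by simp
    have "is_unit (u * (1 - e) + 1 * e)" by (rule CU[OF u one_unit])
    then obtain w where w: "(u * (1 - e) + 1 * e) * w = 1" unfolding is_unit_def by auto
    have "(a * (1 - e) + 1 * e) * ((x * (1 - e) + 1 * e) * w) = 1"
      using eq w by (simp only: mult.assoc[symmetric])
    thus ?thesis by (rule dfinite[OF sc])
  qed
  define c where "c = 1 * (1 - e) + b * e"
  have Uc: "is_unit c"
  proof -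
    have bye: "b * y * e = (- u) * e"
    proof -
      have "b * y = 1 - a * x" using xy by (simp add: algebra_simps)
      hence "b * y * e = e - (e + u) * e" using eu by (simp add: left_diff_distrib)
      thus ?thesis using ee by (simp add: algebra_simps)
    qed
    have "c * (1 * (1 - e) + y * e) = 1 * 1 * (1 - e) + b * y * e"
      unfolding c_def by (rule CM)
    also have "\<dots> = 1 * (1 - e) + (- u) * e" using bye by simp
    finally have eq: "c * (1 * (1 - e) + y * e) = 1 * (1 - e) + (- u) * e" .
    have "is_unit (1 * (1 - e) + (- u) * e)" by (rule CU[OF one_unit neg_unit[OF u]])
    then obtain w where w: "(1 * (1 - e) + (- u) * e) * w = 1" unfolding is_unit_def by auto
    have "c * ((1 * (1 - e) + y * e) * w) = 1" using eq w by (simp only: mult.assoc[symmetric])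
    thus ?thesis by (rule dfinite[OF sc])
  qed
  obtain c' where c': "c * c' = 1" "c' * c = 1" using Uc unit_inv by blast
  define z where "z = c' * a * e"
  obtain f w where f: "is_projection f" and w: "is_unit w" and fw: "- z = f + w"
    using sc unfolding strongly_star_clean_def by blast
  have ff: "f * f = f" using f unfolding is_projection_def by simp
  have Cf: "\<And>r. f * r = r * f" using idem_central[OF sc ff] by simp
  define q where "q = f * e"
  have qq: "q * q = q" unfolding q_def
    by (metis C ee ff mult.assoc)
  have zf: "z + f = - w" using fw by (metis add.commute add_diff_cancel_right minus_add_cancel minus_diff_eq diff_minus_eq_add minus_minus)
  have Uzf: "is_unit (z + f)" unfolding zf by (rule neg_unit[OF w])
  define V where "V = c * (z + f)"
  have UV: "is_unit V" unfolding V_def by (rule unit_mult[OF Uc Uzf])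
  have cfe: "c * f * e = b * q"
  proof -
    have "c * f * e = (1 - e) * f * e + b * e * f * e" unfolding c_def by (simp add: algebra_simps)
    also have "(1 - e) * f * e = 0" by (metis Cf e1(2) mult.assoc mult_zero_right)
    also have "b * e * f * e = b * q" unfolding q_def by (metis C ee mult.assoc)
    finally show ?thesis by simp
  qed
  have key: "V * e = a * e + b * q"
  proof -
    have "V * e = c * c' * a * e * e + c * f * e"
      unfolding V_def z_def by (simp add: distrib_left distrib_right mult.assoc)
    also have "c * c' * a * e * e = a * e" using c' ee by (simp add: mult.assoc)
    finally show ?thesis using cfe by simp
  qed
  have prod: "(a * (1 - e) + 1 * e) * (1 * (1 - e) + V * e) = a + b * q"
  proof -
    have "(a * (1 - e) + 1 * e) * (1 * (1 - e) + V * e) = a * 1 * (1 - e) + 1 * V * e" by (rule CM)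
    also have "\<dots> = a * (1 - e) + (a * e + b * q)" using key by simp
    also have "\<dots> = a + b * q" by (simp add: algebra_simps)
    finally show ?thesis .
  qed
  have "is_unit (a + b * q)" unfolding prod[symmetric]
    by (rule unit_mult[OF U1 CU[OF one_unit UV]])
  moreover have "is_projection q" by (rule idem_proj[OF sc qq])
  ultimately show "\<exists>p. is_projection p \<and> is_unit (a + b * p)" by blast
qed

end
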